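(* Let $G$ be a circulant graph with an odd number of vertices and let $n \ge 1$. Then $K_{n,n} \otimes G$ is a circulant graph.
   Context: Graphs have no multiple edges but may have loops. The tensor product $G \otimes H$ of graphs $G$ and $H$ has vertex set $V(G)\times V(H)$, with $(g,h)$ adjacent to $(g',h')$ if and only if $g$ is adjacent to $g'$ in $G$ and $h$ is adjacent to $h'$ in $H$. $K_{n,n}$ denotes the complete bipartite graph with both parts of size $n$. For an integer $N\ge 1$ and a set $S$ of integers, the circulant graph $C_NS$ has vertex set $\{0,1,\dots,N-1\}$, with $i$ adjacent to $j$ if and only if $i-j \equiv \pm s \pmod N$ for some $s\in S$. A graph is circulant if it is isomorphic to some $C_NS$ (this includes disconnected graphs); equivalently, if it has an automorphism that permutes all its vertices in a single cycle. *)

theory Defs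
  imports Main "HOL-Number_Theory.Cong"
begin

text \<open>A graph (loops allowed, no multiple edges) is given by its vertex set together with
an adjacency relation; only the restriction of the relation to the vertex set matters.\<close>
type_synonym 'a graph = "'a set \<times> ('a \<Rightarrow> 'a \<Rightarrow> bool)"

definition verts :: "'a graph \<Rightarrow> 'a set" where "verts G = fst G"
definition adj :: "'a graph \<Rightarrow> 'a \<Rightarrow> 'a \<Rightarrow> bool" where "adj G = snd G"

definition graph_iso :: "'a graph \<Rightarrow> 'b graph \<Rightarrow> bool" where
  "graph_iso G H \<longleftrightarrow> (\<exists>f. bij_betw f (verts G) (verts H) \<and>
     (\<forall>x\<in>verts G. \<forall>y\<in>verts G. adj H (f x) (f y) \<longleftrightarrow> adj G x y))"

definition circ_graph :: "nat \<Rightarrow> int set \<Rightarrow> nat graph" where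
  "circ_graph N S = ({0..<N}, \<lambda>i j. \<exists>s\<in>S. [int i - int j = s] (mod int N) \<or> [int i - int j = - s] (mod int N))"

definition circulant :: "'a graph \<Rightarrow> bool" where
  "circulant G \<longleftrightarrow> (\<exists>N S. N \<ge> 1 \<and> graph_iso G (circ_graph N S))"

definition tensor :: "'a graph \<Rightarrow> 'b graph \<Rightarrow> ('a \<times> 'b) graph" where
  "tensor G H = (verts G \<times> verts H,
     \<lambda>(g, h) (g', h'). adj G g g' \<and> adj H h h')"

definition K_nn :: "nat \<Rightarrow> (bool \<times> nat) graph" where
  "K_nn n = (UNIV \<times> {0..<n}, \<lambda>(b, i) (c, j). b \<noteq> c)"

end

theory Submission
  imports Defs
begin

lemma graph_iso_sym:
  assumes "graph_iso G H" shows "graph_iso H G"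
proof -
  obtain f where f: "bij_betw f (verts G) (verts H)"
    "\<forall>x\<in>verts G. \<forall>y\<in>verts G. adj H (f x) (f y) \<longleftrightarrow> adj G x y"
    using assms unfolding graph_iso_def by blast
  let ?g = "inv_into (verts G) f"
  have b: "bij_betw ?g (verts H) (verts G)" using f(1) by (rule bij_betw_inv_into)
  have "\<forall>x\<in>verts H. \<forall>y\<in>verts H. adj G (?g x) (?g y) \<longleftrightarrow> adj H x y"
  proof (intro ballI)
    fix x y assume xy: "x \<in> verts H" "y \<in> verts H"
    have gx: "?g x \<in> verts G" "?g y \<in> verts G" using b xy by (auto simp: bij_betw_def)
    have "f (?g x) = x" "f (?g y) = y" using f(1) xy
      by (auto simp: bij_betw_def f_inv_into_f)
    then show "adj G (?g x) (?g y) \<longleftrightarrow> adj H x y" using f(2) gx by metis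
  qed
  with b show ?thesis unfolding graph_iso_def by blast
qed

lemma graph_iso_trans:
  assumes "graph_iso G H" "graph_iso H K" shows "graph_iso G K"
proof -
  obtain f where f: "bij_betw f (verts G) (verts H)"
    "\<forall>x\<in>verts G. \<forall>y\<in>verts G. adj H (f x) (f y) \<longleftrightarrow> adj G x y"
    using assms(1) unfolding graph_iso_def by blast
  obtain g where g: "bij_betw g (verts H) (verts K)"
    "\<forall>x\<in>verts H. \<forall>y\<in>verts H. adj K (g x) (g y) \<longleftrightarrow> adj H x y"
    using assms(2) unfolding graph_iso_def by blast
  have "bij_betw (g \<circ> f) (verts G) (verts K)" using f(1) g(1) by (rule bij_betw_trans)
  moreover have "\<forall>x\<in>verts G. \<forall>y\<in>verts G. adj K ((g \<circ> f) x) ((g \<circ> f) y) \<longleftrightarrow> adj G x y"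
  proof (intro ballI)
    fix x y assume xy: "x \<in> verts G" "y \<in> verts G"
    then have "f x \<in> verts H" "f y \<in> verts H" using f(1) by (auto simp: bij_betw_apply)
    then show "adj K ((g \<circ> f) x) ((g \<circ> f) y) \<longleftrightarrow> adj G x y" using f(2) g(2) xy by simp
  qed
  ultimately show ?thesis unfolding graph_iso_def by blast
qed

lemma tensor_iso:
  assumes "graph_iso G H" shows "graph_iso (tensor K G) (tensor K H)"
proof -
  obtain f where f: "bij_betw f (verts G) (verts H)"
    "\<forall>x\<in>verts G. \<forall>y\<in>verts G. adj H (f x) (f y) \<longleftrightarrow> adj G x y"
    using assms(1) unfolding graph_iso_def by blast
  have "bij_betw (map_prod id f) (verts K \<times> verts G) (verts K \<times> verts H)"
    by (rule bij_betw_map_prod[OF bij_betw_id f(1)])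
  moreover have "\<forall>x\<in>verts K \<times> verts G. \<forall>y\<in>verts K \<times> verts G.
     adj (tensor K H) (map_prod id f x) (map_prod id f y) \<longleftrightarrow> adj (tensor K G) x y"
    using f(2) by (auto simp: tensor_def adj_def verts_def)
  moreover have vt1: "verts (tensor K G) = verts K \<times> verts G"
    by (simp add: tensor_def verts_def)
  moreover have vt2: "verts (tensor K H) = verts K \<times> verts H"
    by (simp add: tensor_def verts_def)
  ultimately show ?thesis unfolding graph_iso_def vt1 vt2 by blast
qed

lemma main_iso:
  fixes N n :: nat and S :: "int set"
  assumes "odd N" "n \<ge> 1"
  defines "S' \<equiv> {d::int. odd d \<and> (\<exists>s\<in>S. [d = s] (mod int N) \<or> [d = - s] (mod int N))}"
  shows "graph_iso (circ_graph (2*N*n) S') (tensor (K_nn n) (circ_graph N S))"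
proof -
  define M where "M = 2*N*n"
  define h where "h z = ((odd z, z div (2*N)), z mod N)" for z :: nat
  have N0: "N > 0" using assms(1) by (cases N) auto
  have inj: "inj_on h {0..<M}"
  proof (rule inj_onI)
    fix z z' assume "z \<in> {0..<M}" "z' \<in> {0..<M}" and e: "h z = h z'"
    then have a: "odd z = odd z'" "z div (2*N) = z' div (2*N)" "z mod N = z' mod N"
      by (auto simp: h_def)
    have c2: "[z = z'] (mod 2)" using a(1) by (auto simp: cong_def elim!: oddE evenE)
    have cN: "[z = z'] (mod N)" using a(3) by (simp add: cong_def)
    have cop: "coprime 2 N" using assms(1) by simp
    have "[z = z'] (mod 2 * N)" using c2 cN cop by (rule coprime_cong_mult_nat)
    then have "z mod (2*N) = z' mod (2*N)" by (simp add: cong_def)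
    with a(2) show "z = z'" by (metis div_mult_mod_eq)
  qed
  have sub: "h ` {0..<M} \<subseteq> verts (tensor (K_nn n) (circ_graph N S))"
  proof
    fix x assume "x \<in> h ` {0..<M}"
    then obtain z where z: "z < M" "x = h z" by auto
    have "z div (2*N) < n" using z(1) N0 by (simp add: M_def div_less_iff_less_mult mult.commute)
    then show "x \<in> verts (tensor (K_nn n) (circ_graph N S))"
      using z N0 by (simp add: h_def tensor_def verts_def K_nn_def circ_graph_def)
  qed
  have cardT: "card (verts (tensor (K_nn n) (circ_graph N S))) = M"
    by (simp add: tensor_def verts_def K_nn_def circ_graph_def card_cartesian_product M_def)
  have "card (h ` {0..<M}) = M" using inj by (simp add: card_image)
  then have "h ` {0..<M} = verts (tensor (K_nn n) (circ_graph N S))"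
    using sub cardT by (intro card_subset_eq) (auto simp: tensor_def verts_def K_nn_def circ_graph_def)
  with inj have bij: "bij_betw h (verts (circ_graph M S')) (verts (tensor (K_nn n) (circ_graph N S)))"
    by (simp add: bij_betw_def circ_graph_def verts_def)
  have adjeq: "adj (tensor (K_nn n) (circ_graph N S)) (h z) (h z') \<longleftrightarrow> adj (circ_graph M S') z z'"
    if "z < M" "z' < M" for z z'
  proof -
    define D where "D = int z - int z'"
    have modN: "[int (z mod N) - int (z' mod N) = t] (mod int N) \<longleftrightarrow> [D = t] (mod int N)" for t
      unfolding cong_def D_def by (simp add: zmod_int mod_diff_eq)
    have par: "(even z = odd z') \<longleftrightarrow> odd D" unfolding D_def by auto
    have L: "adj (tensor (K_nn n) (circ_graph N S)) (h z) (h z') \<longleftrightarrow>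
       odd D \<and> (\<exists>s\<in>S. [D = s] (mod int N) \<or> [D = - s] (mod int N))"
      by (simp add: h_def tensor_def adj_def K_nn_def circ_graph_def modN par)
    have R: "adj (circ_graph M S') z z' \<longleftrightarrow>
       (\<exists>d\<in>S'. [D = d] (mod int M) \<or> [D = - d] (mod int M))"
      by (simp add: circ_graph_def adj_def D_def)
    have dv2: "int 2 dvd int M" and dvN: "int N dvd int M" by (simp_all add: M_def)
    show ?thesis
    proof
      assume "adj (tensor (K_nn n) (circ_graph N S)) (h z) (h z')"
      then have "D \<in> S'" using L by (simp add: S'_def)
      then show "adj (circ_graph M S') z z'" using R cong_refl by blast
    next
      assume "adj (circ_graph M S') z z'"
      then obtain d where d: "d \<in> S'" "[D = d] (mod int M) \<or> [D = - d] (mod int M)" using R by auto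
      from d(1) obtain s where s: "odd d" "s \<in> S" "[d = s] (mod int N) \<or> [d = - s] (mod int N)"
        by (auto simp: S'_def)
      from d(2) show "adj (tensor (K_nn n) (circ_graph N S)) (h z) (h z')"
      proof
        assume c: "[D = d] (mod int M)"
        have "[D = d] (mod 2)" using cong_dvd_modulus[OF c dv2] by simp
        then have "odd D" using s(1) by (auto simp: cong_def)
        moreover have "[D = d] (mod int N)" using cong_dvd_modulus[OF c dvN] .
        ultimately show ?thesis using L s(2,3) by (meson cong_trans)
      next
        assume c: "[D = - d] (mod int M)"
        have "[D = - d] (mod 2)" using cong_dvd_modulus[OF c dv2] by simp
        then have "odd D" using s(1) by (auto simp: cong_def)
        moreover have cN: "[D = - d] (mod int N)" using cong_dvd_modulus[OF c dvN] .
        moreover have "[- d = - s] (mod int N) \<or> [- d = s] (mod int N)"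
          using s(3) by (metis cong_minus_minus_iff minus_minus)
        ultimately show ?thesis using L s(2) by (meson cong_trans)
      qed
    qed
  qed
  have "graph_iso (circ_graph M S') (tensor (K_nn n) (circ_graph N S))"
    unfolding graph_iso_def
    using bij adjeq by (intro exI[of _ h]) (auto simp: circ_graph_def verts_def)
  then show ?thesis by (simp add: M_def)
qed

theorem theorem8:
  fixes G :: "'a graph" and n :: nat
  assumes "circulant G"
    and "odd (card (verts G))"
    and "n \<ge> 1"
  shows "circulant (tensor (K_nn n) G)"
proof -
  obtain N S where NS: "N \<ge> 1" "graph_iso G (circ_graph N S)"
    using assms(1) unfolding circulant_def by blast
  then obtain f where "bij_betw f (verts G) (verts (circ_graph N S))"
    unfolding graph_iso_def by blast
  then have "card (verts G) = N" by (simp add: bij_betw_same_card circ_graph_def verts_def)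
  then have oN: "odd N" using assms(2) by simp
  define S' where "S' = {d::int. odd d \<and> (\<exists>s\<in>S. [d = s] (mod int N) \<or> [d = - s] (mod int N))}"
  have "graph_iso (circ_graph (2*N*n) S') (tensor (K_nn n) (circ_graph N S))"
    unfolding S'_def using main_iso[OF oN assms(3)] .
  then have "graph_iso (tensor (K_nn n) (circ_graph N S)) (circ_graph (2*N*n) S')"
    by (rule graph_iso_sym)
  then have "graph_iso (tensor (K_nn n) G) (circ_graph (2*N*n) S')"
    using tensor_iso[OF NS(2)] graph_iso_trans by blast
  moreover have "2*N*n \<ge> 1" using NS(1) assms(3) by simp
  ultimately show ?thesis unfolding circulant_def by blast
qed

end
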